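(* Let $C$ be an $(n,\alpha,v,\rho)$-FR code. Define $g'(\ell)$ for $\ell=1,\dots,v$ recursively by $$g'(1)=\rho,\qquad g'(\ell+1)=g'(\ell)+\rho-\left\lceil\frac{\alpha\,g'(\ell)-\ell\rho}{v-\ell}\right\rceil\quad(\ell=1,\dots,v-1).$$ Then for all $k=1,2,\dots,n$, $$M_k(C)\le\sum_{i=1}^{v}\mathbb I\big(k>n-g'(i)\big),$$ where $\mathbb I(P)$ equals $1$ if $P$ holds and $0$ otherwise.
   Context: An incidence structure is a triple $(\mathcal P,\mathcal B,\mathcal I)$ with $\mathcal P$ (points) and $\mathcal B$ (blocks) finite sets and $\mathcal I\subseteq \mathcal P\times\mathcal B$; repeated blocks are allowed. An $(n,\alpha,v,\rho)$-FR code is an incidence structure with $|\mathcal B|=n$, $|\mathcal P|=v$, every point incident with exactly $\rho$ blocks and every block incident with exactly $\alpha$ points. The supported file size is $M_k(C)=\min_{\mathcal K\subseteq\mathcal B,|\mathcal K|=k}|\{p\in\mathcal P:\exists B\in\mathcal K,(p,B)\in\mathcal I\}|$, the minimum number of distinct points incident with some block of a $k$-set of blocks. *)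

theory Defs
  imports Complex_Main
begin

text \<open>An incidence structure (P, B, I): finite point set, finite block set (blocks are
  labels, so repeated point-sets are allowed), incidence relation I \<subseteq> P \<times> B.\<close>
definition incidence_structure :: "'p set \<Rightarrow> 'b set \<Rightarrow> ('p \<times> 'b) set \<Rightarrow> bool" where
  "incidence_structure P B I \<longleftrightarrow> finite P \<and> finite B \<and> I \<subseteq> P \<times> B"

definition FR_code :: "nat \<Rightarrow> nat \<Rightarrow> nat \<Rightarrow> nat \<Rightarrow> 'p set \<Rightarrow> 'b set \<Rightarrow> ('p \<times> 'b) set \<Rightarrow> bool" where
  "FR_code n \<alpha> v \<rho> P B I \<longleftrightarrow> incidence_structure P B I \<and> card B = n \<and> card P = v \<and>
     (\<forall>p\<in>P. card {b\<in>B. (p, b) \<in> I} = \<rho>) \<and>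
     (\<forall>b\<in>B. card {p\<in>P. (p, b) \<in> I} = \<alpha>)"

definition covered :: "'p set \<Rightarrow> ('p \<times> 'b) set \<Rightarrow> 'b set \<Rightarrow> 'p set" where
  "covered P I K = {p\<in>P. \<exists>b\<in>K. (p, b) \<in> I}"

definition file_size :: "'p set \<Rightarrow> 'b set \<Rightarrow> ('p \<times> 'b) set \<Rightarrow> nat \<Rightarrow> nat" where
  "file_size P B I k = Min ((\<lambda>K. card (covered P I K)) ` {K. K \<subseteq> B \<and> card K = k})"

text \<open>The recursion g'(1) = rho, g'(l+1) = g'(l) + rho - ceil((alpha g'(l) - l rho)/(v - l)).
  The value at 0 is an irrelevant dummy.\<close>
fun gprime :: "nat \<Rightarrow> nat \<Rightarrow> nat \<Rightarrow> nat \<Rightarrow> int" where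
  "gprime \<alpha> v \<rho> 0 = 0"
| "gprime \<alpha> v \<rho> (Suc 0) = int \<rho>"
| "gprime \<alpha> v \<rho> (Suc (Suc l)) =
     gprime \<alpha> v \<rho> (Suc l) + int \<rho> -
     \<lceil>(real \<alpha> * real_of_int (gprime \<alpha> v \<rho> (Suc l)) - real (Suc l) * real \<rho>)
        / (real v - real (Suc l))\<rceil>"

end

theory Submission imports Defs begin

lemma card_filter_sum:
  assumes "finite A" shows "card {x\<in>A. P x} = (\<Sum>x\<in>A. if P x then 1 else 0)"
proof -
  have "card {x\<in>A. P x} = (\<Sum>x\<in>{x\<in>A. P x}. 1)" by simp
  also have "\<dots> = (\<Sum>x\<in>A. if P x then 1 else 0)" by (rule sum.inter_filter[OF assms])
  finally show ?thesis .
qed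

lemma double_count:
  assumes "finite X" "finite Y"
  shows "(\<Sum>x\<in>X. card {y\<in>Y. R x y}) = (\<Sum>y\<in>Y. card {x\<in>X. R x y})"
  using assms by (simp add: card_filter_sum sum.swap[of _ X Y])

definition ublocks :: "'b set \<Rightarrow> ('p \<times> 'b) set \<Rightarrow> 'p set \<Rightarrow> 'b set" where
  "ublocks B I S = {b\<in>B. \<exists>p\<in>S. (p, b) \<in> I}"

lemma FR_count:
  assumes "FR_code n \<alpha> v \<rho> P B I"
  shows "\<alpha> * n = v * \<rho>"
proof -
  have fin: "finite P" "finite B" and IPB: "I \<subseteq> P \<times> B"
    using assms unfolding FR_code_def incidence_structure_def by auto
  have "(\<Sum>p\<in>P. card {b\<in>B. (p,b)\<in>I}) = (\<Sum>b\<in>B. card {p\<in>P. (p,b)\<in>I})"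
    by (rule double_count[OF fin])
  also have "\<dots> = (\<Sum>b\<in>B. \<alpha>)" using assms unfolding FR_code_def by simp
  finally have "(\<Sum>p\<in>P. \<rho>) = n * \<alpha>"
    using assms unfolding FR_code_def by simp
  then show ?thesis using assms unfolding FR_code_def by (simp add: mult.commute)
qed

lemma double_S:
  assumes "FR_code n \<alpha> v \<rho> P B I" "S \<subseteq> P"
  shows "(\<Sum>p\<in>P-S. card {b\<in>ublocks B I S. (p,b)\<in>I}) + card S * \<rho> = \<alpha> * card (ublocks B I S)"
proof -
  have fin: "finite P" "finite B" and IPB: "I \<subseteq> P \<times> B"
    using assms unfolding FR_code_def incidence_structure_def by auto
  have finU: "finite (ublocks B I S)" using fin unfolding ublocks_def by auto
  have finS: "finite S" using assms(2) fin finite_subset by blast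
  have "(\<Sum>p\<in>S. card {b\<in>ublocks B I S. (p,b)\<in>I}) = (\<Sum>p\<in>S. \<rho>)"
  proof (rule sum.cong)
    fix p assume p: "p \<in> S"
    have "{b\<in>ublocks B I S. (p,b)\<in>I} = {b\<in>B. (p,b)\<in>I}"
      using p unfolding ublocks_def by auto
    then show "card {b\<in>ublocks B I S. (p,b)\<in>I} = \<rho>"
      using assms p unfolding FR_code_def by auto
  qed simp
  then have eS: "(\<Sum>p\<in>S. card {b\<in>ublocks B I S. (p,b)\<in>I}) = card S * \<rho>" by simp
  have "(\<Sum>p\<in>P-S. card {b\<in>ublocks B I S. (p,b)\<in>I}) + (\<Sum>p\<in>S. card {b\<in>ublocks B I S. (p,b)\<in>I})
      = (\<Sum>p\<in>P. card {b\<in>ublocks B I S. (p,b)\<in>I})"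
    by (simp add: sum.subset_diff[OF assms(2) fin(1)])
  also have "\<dots> = (\<Sum>b\<in>ublocks B I S. card {p\<in>P. (p,b)\<in>I})"
    by (rule double_count[OF fin(1) finU])
  also have "\<dots> = (\<Sum>b\<in>ublocks B I S. \<alpha>)"
    using assms unfolding FR_code_def ublocks_def by (intro sum.cong) auto
  finally show ?thesis using eS by simp
qed

lemma ublocks_insert:
  "ublocks B I (insert p S) = ublocks B I S \<union> {b\<in>B. (p,b)\<in>I}"
  unfolding ublocks_def by auto

lemma exists_ge_avg:
  fixes f :: "'a \<Rightarrow> nat"
  assumes fin: "finite R" and cR: "card R = d" and d0: "d > 0"
    and sumeq: "(\<Sum>p\<in>R. f p) + L = A"
  shows "\<exists>p\<in>R. int (f p) \<ge> \<lceil>(real A - real L) / real d\<rceil>"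
proof (rule ccontr)
  define c where "c = \<lceil>(real A - real L) / real d\<rceil>"
  assume "\<not> ?thesis"
  then have lt: "\<And>p. p\<in>R \<Longrightarrow> int (f p) \<le> c - 1" unfolding c_def by force
  have "(\<Sum>p\<in>R. int (f p)) \<le> of_nat (card R) * (c - 1)"
    by (rule sum_bounded_above) (use lt in auto)
  then have s0: "(\<Sum>p\<in>R. int (f p)) \<le> int d * (c - 1)" using cR by simp
  have "int (\<Sum>p\<in>R. f p) = (\<Sum>p\<in>R. int (f p))" by simp
  then have s1: "int A - int L \<le> int d * (c - 1)" using s0 sumeq by linarith
  have "real_of_int (c - 1) < (real A - real L) / real d"
    using ceiling_correct[of "(real A - real L) / real d"] unfolding c_def by simp
  then have "real d * real_of_int (c - 1) < real A - real L"
    using d0 by (simp add: pos_less_divide_eq mult.commute)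
  moreover have "real_of_int (int A - int L) \<le> real_of_int (int d * (c - 1))"
    using s1 of_int_le_iff by blast
  ultimately show False by simp
qed

lemma ceil_shift:
  fixes a d c :: real and x z :: int
  assumes "a \<le> d" "0 < d" "x \<le> z" "0 \<le> a"
  shows "\<lceil>(a * real_of_int z - c) / d\<rceil> \<le> \<lceil>(a * real_of_int x - c) / d\<rceil> + (z - x)"
proof -
  have "a * real_of_int (z - x) \<le> d * real_of_int (z - x)"
    using assms by (intro mult_right_mono) auto
  then have "a * real_of_int (z - x) / d \<le> real_of_int (z - x)"
    using assms(2) by (simp add: divide_le_eq mult.commute)
  moreover have "(a * real_of_int z - c) / d = (a * real_of_int x - c) / d + a * real_of_int (z - x) / d"
    by (simp add: diff_divide_distrib add_divide_distrib[symmetric] algebra_simps)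
  ultimately have "(a * real_of_int z - c) / d \<le> (a * real_of_int x - c) / d + real_of_int (z - x)"
    by linarith
  then have "\<lceil>(a * real_of_int z - c) / d\<rceil> \<le> \<lceil>(a * real_of_int x - c) / d + real_of_int (z - x)\<rceil>"
    by (rule ceiling_mono)
  then show ?thesis by (metis ceiling_add_of_int)
qed


lemma step:
  assumes FR: "FR_code n \<alpha> v \<rho> P B I" and SP: "S \<subseteq> P" and cS: "card S = l"
    and lv: "l < v" and uy: "int (card (ublocks B I S)) \<le> y" and yn: "y \<le> int n"
  shows "\<exists>p\<in>P-S. int (card (ublocks B I (insert p S))) \<le>
           y + int \<rho> - \<lceil>(real \<alpha> * real_of_int y - real l * real \<rho>) / (real v - real l)\<rceil>
         \<and> y + int \<rho> - \<lceil>(real \<alpha> * real_of_int y - real l * real \<rho>) / (real v - real l)\<rceil> \<le> int n"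
proof -
  have fin: "finite P" "finite B" and IPB: "I \<subseteq> P \<times> B" and cB: "card B = n" and cP: "card P = v"
    and degp: "\<And>p. p\<in>P \<Longrightarrow> card {b\<in>B. (p, b) \<in> I} = \<rho>"
    and degb: "\<And>b. b\<in>B \<Longrightarrow> card {p\<in>P. (p, b) \<in> I} = \<alpha>"
    using FR unfolding FR_code_def incidence_structure_def by auto
  define U where "U = ublocks B I S"
  define u where "u = card U"
  define d where "d = v - l"
  have finU: "finite U" using fin unfolding U_def ublocks_def by auto
  have UB: "U \<subseteq> B" unfolding U_def ublocks_def by auto
  have finS: "finite S" using SP fin finite_subset by blast
  have cR: "card (P - S) = d" using card_Diff_subset[OF finS SP] cP cS d_def by simp
  have d0: "d > 0" using lv d_def by simp
  have Rne: "P - S \<noteq> {}"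
  proof
    assume e: "P - S = {}" show False using cR d0 e by (metis card.empty less_irrefl)
  qed
  have rd: "real v - real l = real d" using lv d_def by simp
  have an: "\<alpha> * n = v * \<rho>" by (rule FR_count[OF FR])
  have an_r: "(real \<alpha> * real n - real l * real \<rho>) / (real v - real l) = real \<rho>"
  proof -
    have "real \<alpha> * real n = real v * real \<rho>" using an by (metis of_nat_mult)
    then have "real \<alpha> * real n - real l * real \<rho> = real \<rho> * (real v - real l)"
      by (simp add: algebra_simps)
    then show ?thesis using rd d0 by simp
  qed
  have ins: "\<And>p. p \<in> P \<Longrightarrow> card (ublocks B I (insert p S)) + card {b\<in>U. (p,b)\<in>I} = u + \<rho>"
  proof -
    fix p assume p: "p \<in> P"
    have "U \<inter> {b\<in>B. (p,b)\<in>I} = {b\<in>U. (p,b)\<in>I}" using UB by auto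
    moreover have "finite {b\<in>B. (p,b)\<in>I}" using fin by auto
    ultimately show "card (ublocks B I (insert p S)) + card {b\<in>U. (p,b)\<in>I} = u + \<rho>"
      using card_Un_Int[OF finU, of "{b\<in>B. (p,b)\<in>I}"] degp[OF p] ublocks_insert[of B I p S]
      unfolding u_def U_def by simp
  qed
  have dS: "(\<Sum>p\<in>P-S. card {b\<in>U. (p,b)\<in>I}) + l * \<rho> = \<alpha> * u"
    using double_S[OF FR SP] cS unfolding U_def u_def by simp
  show ?thesis
  proof (cases "\<alpha> \<le> d")
    case True
    have uy': "int u \<le> y" using uy unfolding u_def U_def .
    have finR: "finite (P - S)" using fin by simp
    obtain p where p: "p \<in> P - S" and
      tp: "int (card {b\<in>U. (p,b)\<in>I}) \<ge> \<lceil>(real (\<alpha> * u) - real (l * \<rho>)) / real d\<rceil>"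
      using exists_ge_avg[OF finR cR d0 dS] by blast
    define cu where "cu = \<lceil>(real \<alpha> * real_of_int (int u) - real l * real \<rho>) / (real v - real l)\<rceil>"
    define cy where "cy = \<lceil>(real \<alpha> * real_of_int y - real l * real \<rho>) / (real v - real l)\<rceil>"
    define cn where "cn = \<lceil>(real \<alpha> * real_of_int (int n) - real l * real \<rho>) / (real v - real l)\<rceil>"
    have cu_eq: "\<lceil>(real (\<alpha> * u) - real (l * \<rho>)) / real d\<rceil> = cu" unfolding cu_def rd by simp
    have ad: "real \<alpha> \<le> real v - real l" using True rd by simp
    have dpos: "0 < real v - real l" using rd d0 by simp
    have m1: "cy \<le> cu + (y - int u)" unfolding cy_def cu_def
      by (rule ceil_shift[OF ad dpos uy']) simp
    have m2: "cn \<le> cy + (int n - y)" unfolding cy_def cn_def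
      by (rule ceil_shift[OF ad dpos yn]) simp
    have cn_eq: "cn = int \<rho>" unfolding cn_def using an_r by simp
    have i1: "card (ublocks B I (insert p S)) + card {b\<in>U. (p,b)\<in>I} = u + \<rho>"
      using ins[of p] p by simp
    have G: "int (card (ublocks B I (insert p S))) \<le> y + int \<rho> - cy \<and> y + int \<rho> - cy \<le> int n"
      using i1 tp cu_eq m1 m2 cn_eq by linarith
    show ?thesis using p G unfolding cy_def by blast
  next
    case False
    have "U = B"
    proof
      show "B \<subseteq> U"
      proof
        fix b assume b: "b \<in> B"
        have "\<not> {p\<in>P. (p,b)\<in>I} \<subseteq> P - S"
        proof
          assume "{p\<in>P. (p,b)\<in>I} \<subseteq> P - S"
          then have "card {p\<in>P. (p,b)\<in>I} \<le> card (P - S)"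
            using fin by (intro card_mono) auto
          then show False using degb[OF b] cR False by simp
        qed
        then show "b \<in> U" using b unfolding U_def ublocks_def by auto
      qed
    qed (use UB in auto)
    then have "y = int n" using uy yn cB unfolding U_def by simp
    then have e: "y + int \<rho> - \<lceil>(real \<alpha> * real_of_int y - real l * real \<rho>) / (real v - real l)\<rceil> = int n"
      using an_r by simp
    obtain p where p: "p \<in> P - S" using Rne by blast
    have "card (ublocks B I (insert p S)) \<le> n"
    proof -
      have "ublocks B I (insert p S) \<subseteq> B" unfolding ublocks_def by auto
      then show ?thesis using cB fin card_mono by metis
    qed
    then show ?thesis using p e by auto
  qed
qed

lemma chain:
  assumes FR: "FR_code n \<alpha> v \<rho> P B I"
  shows "1 \<le> m \<Longrightarrow> m \<le> v \<Longrightarrow> \<exists>S\<subseteq>P. card S = m \<and> int (card (ublocks B I S)) \<le> gprime \<alpha> v \<rho> m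
            \<and> gprime \<alpha> v \<rho> m \<le> int n"
proof (induction m)
  case 0
  then show ?case by simp
next
  case (Suc m)
  have fin: "finite P" "finite B" and cB: "card B = n" and cP: "card P = v"
    and degp: "\<And>p. p\<in>P \<Longrightarrow> card {b\<in>B. (p, b) \<in> I} = \<rho>"
    using FR unfolding FR_code_def incidence_structure_def by auto
  show ?case
  proof (cases m)
    case 0
    have "P \<noteq> {}" using Suc.prems cP by auto
    then obtain p where p: "p \<in> P" by blast
    have e: "ublocks B I {p} = {b\<in>B. (p, b) \<in> I}" unfolding ublocks_def by auto
    have "card {b\<in>B. (p, b) \<in> I} \<le> card B" using fin by (intro card_mono) auto
    then have "card {b\<in>B. (p, b) \<in> I} \<le> n" using cB by simp
    then show ?thesis using 0 p e degp[OF p] by (intro exI[of _ "{p}"]) auto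
  next
    case (Suc l)
    obtain S where S: "S \<subseteq> P" "card S = m" "int (card (ublocks B I S)) \<le> gprime \<alpha> v \<rho> m"
      "gprime \<alpha> v \<rho> m \<le> int n"
      using Suc.IH Suc.prems Suc by auto
    have mlt: "m < v" using Suc.prems by simp
    obtain p where p: "p \<in> P - S" and
      h: "int (card (ublocks B I (insert p S))) \<le>
           gprime \<alpha> v \<rho> m + int \<rho> - \<lceil>(real \<alpha> * real_of_int (gprime \<alpha> v \<rho> m) - real m * real \<rho>) / (real v - real m)\<rceil>
         \<and> gprime \<alpha> v \<rho> m + int \<rho> - \<lceil>(real \<alpha> * real_of_int (gprime \<alpha> v \<rho> m) - real m * real \<rho>) / (real v - real m)\<rceil> \<le> int n"
      using step[OF FR S(1) S(2) mlt S(3) S(4)] by blast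
    have fS: "finite S" using S(1) fin finite_subset by blast
    have "card (insert p S) = Suc m" using p fS S(2) by simp
    moreover have "insert p S \<subseteq> P" using p S(1) by auto
    moreover have "gprime \<alpha> v \<rho> (Suc m) = gprime \<alpha> v \<rho> m + int \<rho> - \<lceil>(real \<alpha> * real_of_int (gprime \<alpha> v \<rho> m) - real m * real \<rho>) / (real v - real m)\<rceil>"
      using Suc by (simp only: gprime.simps)
    ultimately show ?thesis using h by (intro exI[of _ "insert p S"]) simp
  qed
qed

theorem theorem3:
  fixes P :: "'p set" and B :: "'b set" and I :: "('p \<times> 'b) set"
    and n \<alpha> v \<rho> k :: nat
  assumes "FR_code n \<alpha> v \<rho> P B I"
    and "1 \<le> k" and "k \<le> n"
  shows "file_size P B I k \<le>
    (\<Sum>i=1..v. if int k > int n - gprime \<alpha> v \<rho> i then 1 else 0)"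
proof -
  note FR = assms(1)
  have fin: "finite P" "finite B" and cB: "card B = n" and cP: "card P = v"
    using FR unfolding FR_code_def incidence_structure_def by auto
  define A where "A = {l\<in>{0..v}. \<exists>S\<subseteq>P. card S = l \<and> card (ublocks B I S) + k \<le> n}"
  have finA: "finite A" unfolding A_def by auto
  have "0 \<in> A" unfolding A_def ublocks_def using assms(3) by (intro CollectI conjI) (auto intro: exI[of _ "{}"])
  define m where "m = Max A"
  have mA: "m \<in> A" unfolding m_def using finA \<open>0 \<in> A\<close> Max_in by blast
  then obtain S where S: "S \<subseteq> P" "card S = m" "card (ublocks B I S) + k \<le> n" and mv: "m \<le> v"
    unfolding A_def by auto
  have UB: "ublocks B I S \<subseteq> B" unfolding ublocks_def by auto
  have "card (B - ublocks B I S) = n - card (ublocks B I S)"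
    using card_Diff_subset[OF finite_subset[OF UB fin(2)] UB] cB by simp
  then have "k \<le> card (B - ublocks B I S)" using S(3) by simp
  then obtain K where K: "K \<subseteq> B - ublocks B I S" "card K = k" by (meson obtain_subset_with_card_n)
  have cov: "covered P I K \<subseteq> P - S"
    using K(1) unfolding covered_def ublocks_def by auto
  have fS: "finite S" using S(1) fin finite_subset by blast
  have "card (covered P I K) \<le> card (P - S)" using cov fin by (intro card_mono) auto
  also have "\<dots> = v - m" using card_Diff_subset[OF fS S(1)] cP S(2) by simp
  finally have c1: "card (covered P I K) \<le> v - m" .
  have "file_size P B I k \<le> card (covered P I K)"
    unfolding file_size_def
  proof (rule Min_le)
    show "finite ((\<lambda>K. card (covered P I K)) ` {K. K \<subseteq> B \<and> card K = k})"
      using fin by (intro finite_imageI) (auto intro: finite_subset[of _ "Pow B"])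
    show "card (covered P I K) \<in> (\<lambda>K. card (covered P I K)) ` {K. K \<subseteq> B \<and> card K = k}"
      using K by auto
  qed
  also have "\<dots> \<le> v - m" by (rule c1)
  also have "v - m = card {Suc m..v}" by simp
  also have "\<dots> \<le> card {i\<in>{1..v}. int k > int n - gprime \<alpha> v \<rho> i}"
  proof (rule card_mono)
    show "finite {i\<in>{1..v}. int k > int n - gprime \<alpha> v \<rho> i}" by simp
    show "{Suc m..v} \<subseteq> {i\<in>{1..v}. int k > int n - gprime \<alpha> v \<rho> i}"
    proof
      fix i assume i: "i \<in> {Suc m..v}"
      have "i \<notin> A"
      proof
        assume "i \<in> A"
        then have "i \<le> m" unfolding m_def using finA Max_ge by blast
        then show False using i by simp
      qed
      obtain T where T: "T \<subseteq> P" "card T = i" "int (card (ublocks B I T)) \<le> gprime \<alpha> v \<rho> i"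
        using chain[OF FR, of i] i by auto
      have "int k > int n - gprime \<alpha> v \<rho> i"
      proof (rule ccontr)
        assume "\<not> ?thesis"
        then have "card (ublocks B I T) + k \<le> n" using T(3) by linarith
        then have "i \<in> A" unfolding A_def using T i by auto
        then show False using \<open>i \<notin> A\<close> by simp
      qed
      then show "i \<in> {i\<in>{1..v}. int k > int n - gprime \<alpha> v \<rho> i}" using i by simp
    qed
  qed
  also have "\<dots> = (\<Sum>i=1..v. if int k > int n - gprime \<alpha> v \<rho> i then 1 else 0)"
    by (rule card_filter_sum) simp
  finally show ?thesis .
qed

end
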